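(* Fix $t\in\mathbb{Z}_+$ and $\epsilon=O(t)^{-t}$. There exists a distribution $A$ over $\mathbb{R}$ such that: (1) there exist distributions $Q_1,Q_2$ with $A=(1-\epsilon)Q_1+\epsilon Q_2$; (2) $A$ matches its first $t$ moments with $\mathcal{N}(0,1)$; (3) $\mathbb{E}_{X\sim Q_1}[X]=\delta$, where $\delta=\frac1{2000}\frac1t\epsilon^{1-1/t}$; (4) for all $i\ge1$, $(\mathbb{E}_{X\sim Q_1}[|X-\delta|^i])^{1/i}=O(\sqrt i)$; (5) $\chi^2(A,\mathcal{N}(0,1))<\exp(O(\delta^2/\epsilon^2))$.
   Context: $\chi^2(A,N)=\int A(x)^2/N(x)\,dx-1$. The hypothesis $\epsilon=O(t)^{-t}$ means $0<\epsilon\le(C_0t)^{-t}$ for a suitable absolute constant $C_0$. *)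

theory Defs
  imports "HOL-Probability.Probability"
begin

definition is_density :: "(real \<Rightarrow> real) \<Rightarrow> bool" where
  "is_density f \<longleftrightarrow> f \<in> borel_measurable lborel \<and> (\<forall>x. 0 \<le> f x)
     \<and> integrable lborel f \<and> (LINT x|lborel. f x) = 1"

definition chi2 :: "(real \<Rightarrow> real) \<Rightarrow> (real \<Rightarrow> real) \<Rightarrow> real" where
  "chi2 a n = (LINT x|lborel. (a x)\<^sup>2 / n x) - 1"

end

theory Submission
  imports Defs "HOL-Computational_Algebra.Polynomial"
begin


lemma nd_central_moment_indep:
  assumes "(\<sigma>::real) > 0"
  shows "integral\<^sup>L lborel (\<lambda>x. normal_density \<mu> \<sigma> x * (x-\<mu>)^n) = integral\<^sup>L lborel (\<lambda>x. normal_density 0 \<sigma> x * x^n)"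
proof (cases "even n")
  case True
  then obtain k where "n = 2*k" by (auto elim: evenE)
  then show ?thesis using integral_normal_moment_even[where \<sigma>=\<sigma> and k=k and \<mu>=\<mu>, OF assms] integral_normal_moment_even[where \<sigma>=\<sigma> and k=k and \<mu>=0, OF assms] by simp
next
  case False
  then obtain k where "n = 2*k+1" by (auto elim: oddE)
  then show ?thesis using integral_normal_moment_odd[where \<sigma>=\<sigma> and k=k and \<mu>=\<mu>, OF assms] integral_normal_moment_odd[where \<sigma>=\<sigma> and k=k and \<mu>=0, OF assms] by simp
qed

definition NM :: "real \<Rightarrow> nat \<Rightarrow> real" where
  "NM \<sigma> n = integral\<^sup>L lborel (\<lambda>x. normal_density 0 \<sigma> x * x^n)"

lemma nd_moment:
  assumes "(\<sigma>::real) > 0"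
  shows "integrable lborel (\<lambda>x. x^k * normal_density c \<sigma> x)"
    "integral\<^sup>L lborel (\<lambda>x. x^k * normal_density c \<sigma> x) = (\<Sum>i\<le>k. of_nat (k choose i) * c^i * NM \<sigma> (k-i))"
proof -
  have eq: "(\<lambda>x. x^k * normal_density c \<sigma> x) = (\<lambda>x. \<Sum>i\<le>k. (of_nat (k choose i) * c^i) * (normal_density c \<sigma> x * (x-c)^(k-i)))"
  proof
    fix x :: real
    have "x^k = (c + (x-c))^k" by simp
    also have "\<dots> = (\<Sum>i\<le>k. of_nat (k choose i) * c^i * (x-c)^(k-i))" by (rule binomial_ring)
    finally show "x^k * normal_density c \<sigma> x = (\<Sum>i\<le>k. (of_nat (k choose i) * c^i) * (normal_density c \<sigma> x * (x-c)^(k-i)))"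
      by (simp add: sum_distrib_left sum_distrib_right mult.commute mult.left_commute)
  qed
  show "integrable lborel (\<lambda>x. x^k * normal_density c \<sigma> x)"
    unfolding eq by (rule Bochner_Integration.integrable_sum) (simp add: integrable_normal_moment[OF assms])
  show "integral\<^sup>L lborel (\<lambda>x. x^k * normal_density c \<sigma> x) = (\<Sum>i\<le>k. of_nat (k choose i) * c^i * NM \<sigma> (k-i))"
    unfolding eq
    by (subst Bochner_Integration.integral_sum) (auto intro!: integrable_mult_right integrable_normal_moment[OF assms] sum.cong
        simp: NM_def nd_central_moment_indep[OF assms])
qed


lemma lagrange_identity:
  fixes X :: "nat \<Rightarrow> real"
  assumes fin: "finite J" and inj: "inj_on X J" and i: "i < card J"
  shows "(\<Sum>j\<in>J. (\<Prod>l\<in>J-{j}. (y - X l)/(X j - X l)) * X j ^ i) = y ^ i"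
proof -
  define p where "p = (\<Sum>j\<in>J. smult (X j ^ i / (\<Prod>l\<in>J-{j}. (X j - X l))) (\<Prod>l\<in>J-{j}. [:- X l, 1:]))"
  have poly_p: "poly p z = (\<Sum>j\<in>J. (\<Prod>l\<in>J-{j}. (z - X l)/(X j - X l)) * X j ^ i)" for z
    unfolding p_def poly_sum poly_smult poly_prod
    by (intro sum.cong refl) (simp add: prod_dividef fin)
  have "degree p \<le> card J - 1"
    unfolding p_def
  proof (rule degree_sum_le[OF fin])
    fix j assume j: "j \<in> J"
    have "degree (\<Prod>l\<in>J-{j}. [:- X l, 1:]) \<le> (\<Sum>l\<in>J-{j}. degree [:- X l, 1:])"
      using degree_prod_sum_le[of "J-{j}" "\<lambda>l. [:- X l, 1:]"] fin by (simp add: o_def)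
    also have "\<dots> = card J - 1" using j fin by simp
    finally show "degree (smult (X j ^ i / (\<Prod>l\<in>J-{j}. (X j - X l))) (\<Prod>l\<in>J-{j}. [:- X l, 1:])) \<le> card J - 1"
      using degree_smult_le order_trans by blast
  qed
  have "p = monom 1 i"
  proof (rule poly_eqI_degree[where A="X ` J"])
    fix x assume "x \<in> X ` J"
    then obtain k where k: "k \<in> J" "x = X k" by auto
    have "poly p x = (\<Prod>l\<in>J-{k}. (X k - X l)/(X k - X l)) * X k ^ i
        + (\<Sum>j\<in>J-{k}. (\<Prod>l\<in>J-{j}. (X k - X l)/(X j - X l)) * X j ^ i)"
      unfolding poly_p k(2) using k(1) fin by (simp add: sum.remove)
    also have "(\<Sum>j\<in>J-{k}. (\<Prod>l\<in>J-{j}. (X k - X l)/(X j - X l)) * X j ^ i) = 0"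
    proof (rule sum.neutral, intro ballI)
      fix j assume j: "j \<in> J - {k}"
      have "(\<Prod>l\<in>J-{j}. (X k - X l)/(X j - X l)) = 0"
        using j k(1) fin by (intro prod_zero) (auto intro!: bexI[of _ k])
      then show "(\<Prod>l\<in>J-{j}. (X k - X l)/(X j - X l)) * X j ^ i = 0" by simp
    qed
    also have "(\<Prod>l\<in>J-{k}. (X k - X l)/(X k - X l)) = 1"
    proof (rule prod.neutral, intro ballI)
      fix l assume l: "l \<in> J - {k}"
      then have "X k \<noteq> X l" using inj k(1) by (auto dest: inj_onD)
      then show "(X k - X l)/(X k - X l) = 1" by simp
    qed
    finally show "poly p x = poly (monom 1 i) x" using k by (simp add: poly_monom)
  next
    show "degree p < card (X ` J)" using \<open>degree p \<le> card J - 1\<close> i card_image[OF inj] by linarith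
    show "degree (monom (1::real) i) < card (X ` J)" using i card_image[OF inj] by (simp add: degree_monom_eq)
  qed
  then show ?thesis using poly_p[of y] by (simp add: poly_monom)
qed


lemma nd_half: "normal_density c (1/sqrt 2) x = exp (- ((x-c)^2)) / sqrt pi"
  by (simp add: normal_density_def power_divide real_sqrt_divide)

lemma std_nd: "std_normal_density x = exp (-(x^2)/2) / sqrt (2*pi)"
  by (simp add: std_normal_density_def)

lemma ratio_bound:
  assumes "0 \<le> c" "c \<le> 1"
  shows "normal_density c (1/sqrt 2) x \<le> 5 * std_normal_density x"
proof -
  have "- ((x-c)^2) \<le> 1 + (-(x^2)/2)"
  proof -
    have "- ((x-c)^2) - (1 + (-(x^2)/2)) = -((x-2*c)^2)/2 + (c^2 - 1)" by (simp add: power2_eq_square field_simps)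
    moreover have "c^2 \<le> 1" using assms by (simp add: power_le_one)
    moreover have "0 \<le> (x-2*c)^2" by simp
    ultimately show ?thesis by linarith
  qed
  then have "exp (- ((x-c)^2)) \<le> exp 1 * exp (-(x^2)/2)" by (simp add: exp_add[symmetric])
  also have "\<dots> \<le> 3 * exp (-(x^2)/2)" using exp_le by simp
  finally have e: "exp (- ((x-c)^2)) \<le> 3 * exp (-(x^2)/2)" .
  have "exp (- ((x-c)^2)) / sqrt pi \<le> 3 * exp (-(x^2)/2) / sqrt pi" using e by (simp add: divide_right_mono)
  also have "\<dots> = (3 * sqrt 2) * (exp (-(x^2)/2) / sqrt (2*pi))" by (simp add: real_sqrt_mult field_simps)
  also have "\<dots> \<le> 5 * (exp (-(x^2)/2) / sqrt (2*pi))"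
  proof (rule mult_right_mono)
    have "sqrt 2 \<le> 5/3" by (rule real_le_lsqrt) (auto simp: power2_eq_square)
    then show "3 * sqrt 2 \<le> (5::real)" by simp
  qed simp
  finally show ?thesis by (simp add: nd_half std_nd)
qed

lemma pow_exp_bound:
  assumes "i \<ge> 1"
  shows "\<bar>y\<bar>^i \<le> sqrt (4 * real i)^i * exp (y^2/8)"
proof -
  define r where "r = \<bar>y\<bar> / sqrt (4 * real i)"
  have sp: "sqrt (4 * real i) > 0" using assms by simp
  have r0: "r \<ge> 0" by (simp add: r_def)
  have "0 \<le> (r-1)^2" by simp
  moreover have "(r-1)^2 = r^2 - 2*r + 1" by (simp add: power2_eq_square algebra_simps)
  ultimately have "r \<le> 1 + r^2/2" by linarith
  also have "\<dots> \<le> exp (r^2/2)" by (rule exp_ge_add_one_self)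
  finally have "r^i \<le> exp (r^2/2)^i" using r0 by (simp add: power_mono)
  also have "\<dots> = exp (real i * (r^2/2))" by (rule exp_of_nat_mult[symmetric])
  also have "real i * (r^2/2) = y^2/8" using assms
    by (simp add: r_def power_divide)
  finally have "r^i \<le> exp (y^2/8)" .
  moreover have "\<bar>y\<bar>^i = sqrt (4 * real i)^i * r^i" using sp by (simp add: r_def power_divide)
  ultimately show ?thesis using sp by (simp add: mult_left_mono)
qed

lemma tail_bound:
  assumes "\<bar>d\<bar> \<le> 1"
  shows "exp ((x-d)^2/8) * std_normal_density x \<le> 5 * normal_density 0 (sqrt 2) x"
proof -
  have "(x-d)^2/8 \<le> 1 + x^2/4"
  proof -
    have "0 \<le> (x+d)^2" by simp
    moreover have "(x+d)^2 = 2*x^2 + 2*d^2 - (x-d)^2" by (simp add: power2_eq_square algebra_simps)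
    ultimately have "(x-d)^2 \<le> 2*x^2 + 2*d^2" by linarith
    moreover have "d^2 \<le> 1" using assms power_mono[of "\<bar>d\<bar>" 1 2] by simp
    ultimately show ?thesis by simp
  qed
  then have "exp ((x-d)^2/8) * exp (-(x^2)/2) \<le> exp (1 + x^2/4) * exp (-(x^2)/2)" by simp
  also have "\<dots> = exp 1 * exp (-(x^2)/4)" by (simp add: exp_add[symmetric])
  also have "\<dots> \<le> 3 * exp (-(x^2)/4)" using exp_le by simp
  finally have e: "exp ((x-d)^2/8) * exp (-(x^2)/2) \<le> 3 * exp (-(x^2)/4)" .
  have "exp ((x-d)^2/8) * std_normal_density x = (exp ((x-d)^2/8) * exp (-(x^2)/2)) / sqrt (2*pi)"
    by (simp add: std_nd)
  also have "\<dots> \<le> 3 * exp (-(x^2)/4) / sqrt (2*pi)" using e by (simp add: divide_right_mono)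
  also have "\<dots> = (3 * sqrt 2) * (exp (-(x^2)/4) / sqrt (4*pi))"
    by (simp add: real_sqrt_mult field_simps)
  also have "\<dots> \<le> 5 * (exp (-(x^2)/4) / sqrt (4*pi))"
  proof (rule mult_right_mono)
    have "sqrt 2 \<le> 5/3" by (rule real_le_lsqrt) (auto simp: power2_eq_square)
    then show "3 * sqrt 2 \<le> (5::real)" by simp
  qed simp
  also have "exp (-(x^2)/4) / sqrt (4*pi) = normal_density 0 (sqrt 2) x"
    by (simp add: normal_density_def)
  finally show ?thesis by simp
qed

lemma sq_ratio_bound:
  shows "(normal_density (-m) (1/sqrt 2) x)^2 / std_normal_density x \<le> 2 * exp (2*m^2/3) * normal_density (-4*m/3) (1/sqrt 3) x"
proof -
  have E: "- 2*(x+m)^2 + x^2/2 = 2*m^2/3 + (- ((x + 4*m/3)^2) * 3/2)" by (simp add: power2_eq_square field_simps)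
  have "(normal_density (-m) (1/sqrt 2) x)^2 / std_normal_density x
      = (exp (- ((x+m)^2)))^2 / pi * sqrt (2*pi) / exp (-(x^2)/2)"
    by (simp add: nd_half std_nd power_divide)
  also have "\<dots> = sqrt (2*pi) / pi * exp (- 2*(x+m)^2 + x^2/2)"
    by (simp add: exp_add exp_diff exp_minus power2_eq_square[of "exp _"] exp_add[symmetric] field_simps)
  also have "\<dots> = sqrt (2*pi) / pi * (exp (2*m^2/3) * exp (- ((x + 4*m/3)^2) * 3/2))"
    unfolding E exp_add by simp
  also have "\<dots> \<le> 2 * sqrt 3 / sqrt (2*pi) * (exp (2*m^2/3) * exp (- ((x + 4*m/3)^2) * 3/2))"
  proof (rule mult_right_mono)
    have "sqrt (2*pi) * sqrt (2*pi) = 2 * pi" by simp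
    have "sqrt (2*pi) / pi = 2 / sqrt (2*pi)" using pi_gt_zero
      by (simp add: field_simps real_sqrt_mult)
    also have "\<dots> \<le> 2 * sqrt 3 / sqrt (2*pi)" using pi_gt_zero by (simp add: divide_right_mono)
    finally show "sqrt (2*pi) / pi \<le> 2 * sqrt 3 / sqrt (2*pi)" .
  qed simp
  also have "\<dots> = 2 * exp (2*m^2/3) * (sqrt 3 / sqrt (2*pi) * exp (- ((x + 4*m/3)^2) * 3/2))"
    by simp
  also have "sqrt 3 / sqrt (2*pi) * exp (- ((x + 4*m/3)^2) * 3/2) = normal_density (-4*m/3) (1/sqrt 3) x"
    unfolding normal_density_def by (simp add: power_divide real_sqrt_divide real_sqrt_mult)
  finally show ?thesis .
qed


lemma core:
  fixes t :: nat and \<epsilon> m :: real and X W :: "nat \<Rightarrow> real" and J :: "nat set"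
  assumes J: "finite J"
    and t: "t \<ge> 1" and eps: "0 < \<epsilon>" "\<epsilon> \<le> 1/2" and m: "0 < m"
    and ident: "\<And>i. i \<le> t \<Longrightarrow> (\<Sum>j\<in>J. W j * X j ^ i) = - ((-m)^i)"
    and nodes: "\<And>j. j \<in> J \<Longrightarrow> 0 \<le> X j \<and> X j \<le> 1"
    and small: "\<epsilon> * (\<Sum>j\<in>J. \<bar>W j\<bar>) * 5 \<le> 1"
    and dl: "\<epsilon> * m / (1-\<epsilon>) \<le> 1"
  shows "\<exists>a q1 q2 :: real \<Rightarrow> real. is_density a \<and> is_density q1 \<and> is_density q2 \<and> (\<forall>x. a x = (1-\<epsilon>) * q1 x + \<epsilon> * q2 x) \<and>
     (\<forall>k\<in>{1..t}. integrable lborel (\<lambda>x. x^k * a x) \<and> (LINT x|lborel. x^k * a x) = (LINT x|lborel. x^k * std_normal_density x)) \<and>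
     integrable lborel (\<lambda>x. x * q1 x) \<and> (LINT x|lborel. x * q1 x) = \<epsilon>*m/(1-\<epsilon>) \<and>
     (\<forall>i::nat. i \<ge> 1 \<longrightarrow> integrable lborel (\<lambda>x. \<bar>x - \<epsilon>*m/(1-\<epsilon>)\<bar>^i * q1 x) \<and> (LINT x|lborel. \<bar>x - \<epsilon>*m/(1-\<epsilon>)\<bar>^i * q1 x) powr (1/real i) \<le> 40 * sqrt (real i)) \<and>
     integrable lborel (\<lambda>x. (a x)\<^sup>2 / std_normal_density x) \<and> chi2 a std_normal_density \<le> 7 + exp (2*m^2/3)"
proof -
  define s :: real where "s = 1/sqrt 2"
  have s0: "s > 0" by (simp add: s_def)
  define G where "G c x = normal_density c s x" for c x
  define S where "S x = (\<Sum>j\<in>J. W j * G (X j) x)" for x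
  define q1 where "q1 x = (std_normal_density x + \<epsilon> * S x) / (1-\<epsilon>)" for x
  define q2 where "q2 x = G (-m) x" for x
  define a where "a x = (1-\<epsilon>) * q1 x + \<epsilon> * q2 x" for x
  have e1: "1 - \<epsilon> > 0" using eps by simp
  have a_eq: "a x = std_normal_density x + \<epsilon> * S x + \<epsilon> * q2 x" for x
    using e1 by (simp add: a_def q1_def)
  have G_meas[measurable]: "(\<lambda>x. G c x) \<in> borel_measurable borel" for c
    by (simp add: G_def)
  have S_meas[measurable]: "S \<in> borel_measurable borel"
    unfolding S_def[abs_def] by measurable
  have q1_meas[measurable]: "q1 \<in> borel_measurable borel"
    unfolding q1_def[abs_def] by measurable
  have q2_meas[measurable]: "q2 \<in> borel_measurable borel"
    unfolding q2_def[abs_def] by measurable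
  have a_meas[measurable]: "a \<in> borel_measurable borel"
    unfolding a_def[abs_def] by measurable
  have G_int: "integrable lborel (\<lambda>x. G c x)" for c
    using integrable_normal_density[OF s0, of c] by (simp add: G_def)
  have G_int1: "(LINT x|lborel. G c x) = 1" for c
    using integral_normal_density[OF s0, of c] by (simp add: G_def)
  have G_x_int: "integrable lborel (\<lambda>x. x * G c x)" for c
    using integrable_normal_moment_nz_1[OF s0, of c] by (simp add: G_def mult.commute)
  have G_x: "(LINT x|lborel. x * G c x) = c" for c
    using integral_normal_moment_nz_1[OF s0, of c] by (simp add: G_def mult.commute)
  have G_bound: "G (X j) x \<le> 5 * std_normal_density x" if "j \<in> J" for j x
    using ratio_bound[of "X j" x] nodes[OF that] by (simp add: G_def s_def)
  have S_abs: "\<bar>\<epsilon> * S x\<bar> \<le> std_normal_density x" for x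
  proof -
    have "\<bar>S x\<bar> \<le> (\<Sum>j\<in>J. \<bar>W j * G (X j) x\<bar>)" unfolding S_def by (rule sum_abs)
    also have "\<dots> = (\<Sum>j\<in>J. \<bar>W j\<bar> * G (X j) x)" by (simp add: abs_mult G_def)
    also have "\<dots> \<le> (\<Sum>j\<in>J. \<bar>W j\<bar> * (5 * std_normal_density x))"
      by (intro sum_mono mult_left_mono G_bound) auto
    also have "\<dots> = (\<Sum>j\<in>J. \<bar>W j\<bar>) * 5 * std_normal_density x" by (simp add: sum_distrib_right mult.assoc)
    finally have "\<epsilon> * \<bar>S x\<bar> \<le> \<epsilon> * ((\<Sum>j\<in>J. \<bar>W j\<bar>) * 5 * std_normal_density x)"
      using eps by (simp add: mult_left_mono)
    also have "\<dots> = (\<epsilon> * (\<Sum>j\<in>J. \<bar>W j\<bar>) * 5) * std_normal_density x" by simp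
    also have "\<dots> \<le> 1 * std_normal_density x" by (rule mult_right_mono[OF small]) simp
    finally show ?thesis using eps by (simp add: abs_mult)
  qed
  have num_nn: "0 \<le> std_normal_density x + \<epsilon> * S x" for x
    using S_abs[of x] by (simp add: abs_le_iff)
  have num_le: "std_normal_density x + \<epsilon> * S x \<le> 2 * std_normal_density x" for x
    using S_abs[of x] by (simp add: abs_le_iff)
  have q1_nn: "0 \<le> q1 x" for x
    unfolding q1_def using num_nn[of x] e1 by simp
  have q1_le: "q1 x \<le> 4 * std_normal_density x" for x
  proof -
    have "2 * std_normal_density x \<le> (4 * std_normal_density x) * (1 - \<epsilon>)"
    proof -
      have "(\<epsilon> * 2) * std_normal_density x \<le> 1 * std_normal_density x"
        using eps(2) by (intro mult_right_mono) auto
      then show ?thesis by (simp add: algebra_simps)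
    qed
    with num_le[of x] have "std_normal_density x + \<epsilon> * S x \<le> (4 * std_normal_density x) * (1 - \<epsilon>)"
      by (rule order_trans)
    then show ?thesis unfolding q1_def using e1 by (simp add: pos_divide_le_eq)
  qed
  have q2_nn: "0 \<le> q2 x" for x by (simp add: q2_def G_def)
  have a_nn: "0 \<le> a x" for x unfolding a_def using q1_nn[of x] q2_nn[of x] e1 eps by simp
  have S_int: "integrable lborel S"
    unfolding S_def[abs_def] by (rule Bochner_Integration.integrable_sum) (simp add: G_int)
  have S_integral: "(LINT x|lborel. S x) = -1"
  proof -
    have "(LINT x|lborel. S x) = (\<Sum>j\<in>J. W j * (LINT x|lborel. G (X j) x))"
      unfolding S_def by (subst Bochner_Integration.integral_sum) (simp_all add: G_int)
    also have "\<dots> = (\<Sum>j\<in>J. W j * X j ^ 0)" by (simp add: G_int1)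
    also have "\<dots> = -1" using ident[of 0] by simp
    finally show ?thesis .
  qed
  have xS_int: "integrable lborel (\<lambda>x. x * S x)"
  proof -
    have "(\<lambda>x. x * S x) = (\<lambda>x. \<Sum>j\<in>J. W j * (x * G (X j) x))"
      by (simp add: S_def sum_distrib_left mult.left_commute)
    then show ?thesis by (simp add: G_x_int)
  qed
  have xS_integral: "(LINT x|lborel. x * S x) = m"
  proof -
    have "(\<lambda>x. x * S x) = (\<lambda>x. \<Sum>j\<in>J. W j * (x * G (X j) x))"
      by (simp add: S_def sum_distrib_left mult.left_commute)
    then have "(LINT x|lborel. x * S x) = (\<Sum>j\<in>J. W j * (LINT x|lborel. x * G (X j) x))"
      by (simp add: Bochner_Integration.integral_sum G_x_int)
    also have "\<dots> = (\<Sum>j\<in>J. W j * X j ^ 1)" by (simp add: G_x)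
    also have "\<dots> = m" using ident[of 1] t by simp
    finally show ?thesis .
  qed
  have std_int: "integrable lborel std_normal_density" by simp
  have q1_int: "integrable lborel q1"
    unfolding q1_def[abs_def] using S_int by simp
  have q1_integral: "(LINT x|lborel. q1 x) = 1"
    unfolding q1_def using S_int S_integral e1 by simp
  have q2_int: "integrable lborel q2" unfolding q2_def[abs_def] by (simp add: G_int)
  have q2_integral: "(LINT x|lborel. q2 x) = 1" unfolding q2_def by (simp add: G_int1)
  have a_int: "integrable lborel a" unfolding a_def[abs_def] using q1_int q2_int by simp
  have a_integral: "(LINT x|lborel. a x) = 1"
    unfolding a_def using q1_int q2_int q1_integral q2_integral by simp
  have dens: "is_density a" "is_density q1" "is_density q2"
    unfolding is_density_def using a_int a_integral q1_int q1_integral q2_int q2_integral a_nn q1_nn q2_nn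
    by auto
  define d where "d = \<epsilon>*m/(1-\<epsilon>)"
  have d01: "0 \<le> d" "d \<le> 1" using dl eps m e1 by (auto simp: d_def)
  have std_x: "(LINT x|lborel. x * std_normal_density x) = 0"
    using integral_normal_moment_nz_1[of 1 0] by (simp add: mult.commute)
  have std_x_int: "integrable lborel (\<lambda>x. x * std_normal_density x)"
    using integrable_normal_moment_nz_1[of 1 0] by (simp add: mult.commute)
  have xq1: "integrable lborel (\<lambda>x. x * q1 x) \<and> (LINT x|lborel. x * q1 x) = d"
  proof -
    have eq: "(\<lambda>x. x * q1 x) = (\<lambda>x. (x * std_normal_density x + \<epsilon> * (x * S x)) / (1-\<epsilon>))"
      by (simp add: q1_def algebra_simps)
    show ?thesis unfolding eq using std_x_int xS_int std_x xS_integral by (simp add: d_def)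
  qed
  have mom: "integrable lborel (\<lambda>x. x^k * a x) \<and> (LINT x|lborel. x^k * a x) = (LINT x|lborel. x^k * std_normal_density x)"
    if k: "k \<le> t" for k
  proof -
    have eq: "(\<lambda>x. x^k * a x) = (\<lambda>x. x^k * std_normal_density x + \<epsilon> * (\<Sum>j\<in>J. W j * (x^k * G (X j) x)) + \<epsilon> * (x^k * G (-m) x))"
      by (rule ext) (simp add: a_eq S_def q2_def distrib_left sum_distrib_left mult.left_commute)
    have i1: "integrable lborel (\<lambda>x. x^k * std_normal_density x)"
      using integrable_std_normal_moment[of k] by (simp add: mult.commute)
    have i2: "integrable lborel (\<lambda>x. x^k * G c x)" for c
      using nd_moment(1)[OF s0, of k c] by (simp add: G_def)
    have v2: "(LINT x|lborel. x^k * G c x) = (\<Sum>i\<le>k. of_nat (k choose i) * c^i * NM s (k-i))" for c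
      using nd_moment(2)[OF s0, of k c] by (simp add: G_def)
    have i3: "integrable lborel (\<lambda>x. \<Sum>j\<in>J. W j * (x^k * G (X j) x))"
      by (rule Bochner_Integration.integrable_sum) (simp add: i2)
    have cancel: "(\<Sum>j\<in>J. W j * (\<Sum>i\<le>k. of_nat (k choose i) * X j^i * NM s (k-i)))
        = - (\<Sum>i\<le>k. of_nat (k choose i) * (-m)^i * NM s (k-i))"
    proof -
      have "(\<Sum>j\<in>J. W j * (\<Sum>i\<le>k. of_nat (k choose i) * X j^i * NM s (k-i)))
          = (\<Sum>j\<in>J. \<Sum>i\<le>k. of_nat (k choose i) * NM s (k-i) * (W j * X j^i))"
        by (simp add: sum_distrib_left mult_ac)
      also have "\<dots> = (\<Sum>i\<le>k. \<Sum>j\<in>J. of_nat (k choose i) * NM s (k-i) * (W j * X j^i))"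
        by (rule sum.swap)
      also have "\<dots> = (\<Sum>i\<le>k. of_nat (k choose i) * NM s (k-i) * (\<Sum>j\<in>J. W j * X j^i))"
        by (simp add: sum_distrib_left)
      also have "\<dots> = (\<Sum>i\<le>k. of_nat (k choose i) * NM s (k-i) * (- ((-m)^i)))"
        using ident k by (intro sum.cong refl) auto
      also have "\<dots> = - (\<Sum>i\<le>k. of_nat (k choose i) * (-m)^i * NM s (k-i))"
        by (simp add: sum_negf[symmetric] mult_ac)
      finally show ?thesis .
    qed
    have "(LINT x|lborel. x^k * a x) = (LINT x|lborel. x^k * std_normal_density x)
        + \<epsilon> * (\<Sum>j\<in>J. W j * (LINT x|lborel. x^k * G (X j) x)) + \<epsilon> * (LINT x|lborel. x^k * G (-m) x)"
      unfolding eq using i1 i2 i3 by (simp add: Bochner_Integration.integral_sum)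
    also have "\<dots> = (LINT x|lborel. x^k * std_normal_density x)"
      unfolding v2 cancel by simp
    finally show ?thesis unfolding eq using i1 i2 i3 by simp
  qed
  have cm: "integrable lborel (\<lambda>x. \<bar>x-d\<bar>^i * q1 x) \<and> (LINT x|lborel. \<bar>x-d\<bar>^i * q1 x) powr (1/real i) \<le> 40 * sqrt (real i)"
    if i: "i \<ge> 1" for i
  proof -
    define K where "K = sqrt (4 * real i)^i"
    have K0: "K > 0" using i by (simp add: K_def)
    define B where "B x = 20 * K * normal_density 0 (sqrt 2) x" for x
    have B_int: "integrable lborel B" unfolding B_def[abs_def]
      using integrable_normal_density[of "sqrt 2" 0] by simp
    have B_integral: "(LINT x|lborel. B x) = 20*K" unfolding B_def
      using integral_normal_density[of "sqrt 2" 0] by simp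
    have nn: "0 \<le> \<bar>x-d\<bar>^i * q1 x" for x using q1_nn by simp
    have pt: "\<bar>x-d\<bar>^i * q1 x \<le> B x" for x
    proof -
      have "\<bar>x-d\<bar>^i * q1 x \<le> (K * exp ((x-d)^2/8)) * (4 * std_normal_density x)"
        using pow_exp_bound[OF i, of "x-d"] q1_le[of x] q1_nn[of x] by (intro mult_mono) (auto simp: K_def)
      also have "\<dots> = 4*K * (exp ((x-d)^2/8) * std_normal_density x)" by (simp add: mult_ac)
      also have "\<dots> \<le> 4*K * (5 * normal_density 0 (sqrt 2) x)"
        using tail_bound[of d x] d01 K0 by (intro mult_left_mono) auto
      finally show ?thesis by (simp add: B_def mult_ac)
    qed
    have int: "integrable lborel (\<lambda>x. \<bar>x-d\<bar>^i * q1 x)"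
    proof (rule Bochner_Integration.integrable_bound[OF B_int])
      show "(\<lambda>x. \<bar>x-d\<bar>^i * q1 x) \<in> borel_measurable lborel" by measurable
      show "AE x in lborel. norm (\<bar>x-d\<bar>^i * q1 x) \<le> norm (B x)"
        using pt nn by (intro AE_I2) (metis abs_of_nonneg order_trans real_norm_def)
    qed
    have I_le: "(LINT x|lborel. \<bar>x-d\<bar>^i * q1 x) \<le> 20*K"
      using integral_mono[OF int B_int pt] B_integral by simp
    have I_nn: "0 \<le> (LINT x|lborel. \<bar>x-d\<bar>^i * q1 x)"
      by (rule Bochner_Integration.integral_nonneg) (simp add: nn)
    have "(LINT x|lborel. \<bar>x-d\<bar>^i * q1 x) powr (1/real i) \<le> (20*K) powr (1/real i)"
      by (rule powr_mono2) (use I_nn I_le in auto)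
    also have "\<dots> = 20 powr (1/real i) * K powr (1/real i)" using K0 by (simp add: powr_mult)
    also have "K powr (1/real i) = sqrt (4 * real i)"
    proof -
      have "K = sqrt (4 * real i) powr (real i)" using i by (simp add: K_def powr_realpow)
      then have "K powr (1/real i) = sqrt (4 * real i) powr (real i * (1/real i))" by (simp add: powr_powr)
      also have "\<dots> = sqrt (4 * real i)" using i by simp
      finally show ?thesis .
    qed
    also have "20 powr (1/real i) \<le> (20::real) powr 1"
      using i by (intro powr_mono) auto
    then have "20 powr (1/real i) * sqrt (4 * real i) \<le> 20 * sqrt (4 * real i)" by (intro mult_right_mono) auto
    also have "sqrt (4 * real i) = 2 * sqrt (real i)" by (simp add: real_sqrt_mult)
    finally show ?thesis using int by simp
  qed
  define nd3 where "nd3 x = normal_density (-4*m/3) (1/sqrt 3) x" for x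
  define C where "C = exp (2*m^2/3)"
  have nd3_int: "integrable lborel nd3" unfolding nd3_def[abs_def]
    using integrable_normal_density[of "1/sqrt 3" "-4*m/3"] by simp
  have nd3_integral: "(LINT x|lborel. nd3 x) = 1" unfolding nd3_def
    using integral_normal_density[of "1/sqrt 3" "-4*m/3"] by simp
  have std_pos: "0 < std_normal_density x" for x by (simp add: normal_density_pos)
  have pt2: "(a x)^2 / std_normal_density x \<le> 8 * std_normal_density x + 4 * \<epsilon>^2 * C * nd3 x" for x
  proof -
    have a_le: "a x \<le> 2 * std_normal_density x + \<epsilon> * q2 x" using a_eq[of x] num_le[of x] by simp
    have "(a x)^2 \<le> (2 * std_normal_density x + \<epsilon> * q2 x)^2" using a_nn[of x] a_le by (intro power_mono) auto
    also have "\<dots> \<le> 8 * (std_normal_density x)^2 + 2 * \<epsilon>^2 * (q2 x)^2"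
    proof -
      have "0 \<le> (2 * std_normal_density x - \<epsilon> * q2 x)^2" by simp
      then show ?thesis by (simp add: power2_eq_square algebra_simps)
    qed
    finally have "(a x)^2 / std_normal_density x \<le> (8 * (std_normal_density x)^2 + 2 * \<epsilon>^2 * (q2 x)^2) / std_normal_density x"
      using std_pos[of x] by (simp add: divide_right_mono)
    also have "\<dots> = 8 * std_normal_density x + 2 * \<epsilon>^2 * ((q2 x)^2 / std_normal_density x)"
      using std_pos[of x] by (simp add: field_simps power2_eq_square)
    also have "(q2 x)^2 / std_normal_density x \<le> 2 * C * nd3 x"
      using sq_ratio_bound[of m x] by (simp add: q2_def G_def s_def C_def nd3_def)
    then have "8 * std_normal_density x + 2 * \<epsilon>^2 * ((q2 x)^2 / std_normal_density x) \<le> 8 * std_normal_density x + 2 * \<epsilon>^2 * (2 * C * nd3 x)"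
      by (intro add_left_mono mult_left_mono) auto
    finally show ?thesis by (simp add: mult_ac)
  qed
  have R_int: "integrable lborel (\<lambda>x. 8 * std_normal_density x + 4 * \<epsilon>^2 * C * nd3 x)"
    using nd3_int by simp
  have chi_int: "integrable lborel (\<lambda>x. (a x)\<^sup>2 / std_normal_density x)"
  proof (rule Bochner_Integration.integrable_bound[OF R_int])
    show "(\<lambda>x. (a x)\<^sup>2 / std_normal_density x) \<in> borel_measurable lborel" by measurable
    show "AE x in lborel. norm ((a x)\<^sup>2 / std_normal_density x) \<le> norm (8 * std_normal_density x + 4 * \<epsilon>^2 * C * nd3 x)"
    proof (intro AE_I2)
      fix x
      have "0 \<le> (a x)\<^sup>2 / std_normal_density x" using std_pos[of x] by simp
      then show "norm ((a x)\<^sup>2 / std_normal_density x) \<le> norm (8 * std_normal_density x + 4 * \<epsilon>^2 * C * nd3 x)"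
        using pt2[of x] by simp
    qed
  qed
  have chi_le: "chi2 a std_normal_density \<le> 7 + C"
  proof -
    have "(LINT x|lborel. (a x)\<^sup>2 / std_normal_density x) \<le> (LINT x|lborel. 8 * std_normal_density x + 4 * \<epsilon>^2 * C * nd3 x)"
      by (rule integral_mono[OF chi_int R_int pt2])
    also have "\<dots> = 8 + 4 * \<epsilon>^2 * C" using nd3_int nd3_integral by simp
    also have "4 * \<epsilon>^2 * C \<le> 1 * C"
    proof (rule mult_right_mono)
      have "\<epsilon>^2 \<le> (1/2)^2" using eps by (intro power_mono) auto
      then show "4 * \<epsilon>^2 \<le> 1" by (simp add: power_divide)
    qed (simp add: C_def)
    finally show ?thesis unfolding chi2_def by simp
  qed
  show ?thesis
    apply (rule exI[of _ a], rule exI[of _ q1], rule exI[of _ q2])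
    using dens mom xq1 cm chi_int chi_le by (auto simp: a_def d_def C_def)
qed


lemma main_case:
  fixes t :: nat and \<epsilon> :: real
  assumes t: "t \<ge> 1" and e0: "0 < \<epsilon>" and eb: "\<epsilon> \<le> (4000 * real t) powr (- real t)"
  defines "\<delta> \<equiv> (1/2000) * (1 / real t) * \<epsilon> powr (1 - 1 / real t)"
  shows "\<exists>a q1 q2 :: real \<Rightarrow> real.
         is_density a \<and> is_density q1 \<and> is_density q2 \<and>
         (\<forall>x. a x = (1 - \<epsilon>) * q1 x + \<epsilon> * q2 x) \<and>
         (\<forall>k\<in>{1..t}. integrable lborel (\<lambda>x. x ^ k * a x) \<and>
            (LINT x|lborel. x ^ k * a x) = (LINT x|lborel. x ^ k * std_normal_density x)) \<and>
         integrable lborel (\<lambda>x. x * q1 x) \<and> (LINT x|lborel. x * q1 x) = \<delta> \<and>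
         (\<forall>i::nat. i \<ge> 1 \<longrightarrow> integrable lborel (\<lambda>x. \<bar>x - \<delta>\<bar> ^ i * q1 x) \<and>
            (LINT x|lborel. \<bar>x - \<delta>\<bar> ^ i * q1 x) powr (1 / real i) \<le> 40 * sqrt (real i)) \<and>
         integrable lborel (\<lambda>x. (a x)\<^sup>2 / std_normal_density x) \<and>
         chi2 a std_normal_density < exp (4 * \<delta>\<^sup>2 / \<epsilon>\<^sup>2)"
proof -
  have tpos: "real t \<ge> 1" using t by simp
  define u where "u = \<epsilon> powr (1 / real t)"
  have u0: "u > 0" using e0 by (simp add: u_def)
  have u_le: "u \<le> 1/(4000 * real t)"
  proof -
    have "u \<le> ((4000 * real t) powr (- real t)) powr (1/real t)"
      unfolding u_def by (rule powr_mono2) (use e0 eb in auto)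
    also have "\<dots> = (4000 * real t) powr (-1)" using tpos by (simp add: powr_powr)
    also have "\<dots> = 1/(4000 * real t)" using tpos by (simp add: powr_minus_divide)
    finally show ?thesis .
  qed
  have inv_le: "1/(4000 * real t) \<le> 1/4000" using tpos by (simp add: field_simps)
  have u_le1: "u \<le> 1" using u_le inv_le by linarith
  have eps_u: "\<epsilon> = u^t"
  proof -
    have "u^t = u powr (real t)" using u0 by (simp add: powr_realpow)
    also have "\<dots> = \<epsilon> powr (1 / real t * real t)" unfolding u_def by (simp add: powr_powr)
    also have "\<dots> = \<epsilon>" using tpos e0 by simp
    finally show ?thesis by simp
  qed
  have eps_le_u: "\<epsilon> \<le> u" unfolding eps_u using power_decreasing[of 1 t u] t u0 u_le1 by simp
  have eps_half: "\<epsilon> \<le> 1/2" using eps_le_u u_le inv_le by linarith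
  have delta_eq: "\<delta> = \<epsilon> / (2000 * real t * u)"
  proof -
    have "\<epsilon> powr (1 - 1 / real t) = \<epsilon> powr 1 / \<epsilon> powr (1/real t)" by (rule powr_diff)
    also have "\<dots> = \<epsilon> / u" using e0 by (simp add: u_def)
    finally show ?thesis unfolding \<delta>_def by simp
  qed
  define r where "r = \<delta> / \<epsilon>"
  have r_eq: "r = 1 / (2000 * real t * u)" using e0 by (simp add: r_def delta_eq)
  have r2: "r \<ge> 2"
  proof -
    have "2000 * real t * u \<le> 1/2" using u_le tpos by (simp add: field_simps)
    then show ?thesis unfolding r_eq using u0 tpos by (simp add: field_simps)
  qed
  define m where "m = (1-\<epsilon>) * r"
  have m0: "m > 0" using r2 eps_half by (simp add: m_def)
  have m_le: "m \<le> r" using r2 e0 by (simp add: m_def algebra_simps)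
  have d_eq: "\<epsilon> * m / (1-\<epsilon>) = \<delta>" using e0 eps_half by (simp add: m_def r_def)
  have dl: "\<epsilon> * m / (1-\<epsilon>) \<le> 1"
  proof -
    have "\<delta> \<le> 1 / (2000 * real t)" unfolding delta_eq using eps_le_u u0 tpos by (simp add: field_simps)
    also have "\<dots> \<le> 1" using tpos by simp
    finally show ?thesis using d_eq by simp
  qed
  define J where "J = {1..t+1}"
  define X where "X j = real j / (real t + 1)" for j :: nat
  define W where "W j = - (\<Prod>l\<in>J-{j}. (-m - X l)/(X j - X l))" for j
  have finJ: "finite J" and cardJ: "card J = t + 1" by (simp_all add: J_def)
  have injX: "inj_on X J" by (auto simp: inj_on_def X_def)
  have ident: "(\<Sum>j\<in>J. W j * X j ^ i) = - ((-m)^i)" if "i \<le> t" for i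
  proof -
    have "(\<Sum>j\<in>J. W j * X j ^ i) = - (\<Sum>j\<in>J. (\<Prod>l\<in>J-{j}. (-m - X l)/(X j - X l)) * X j ^ i)"
      by (simp add: W_def sum_negf)
    also have "(\<Sum>j\<in>J. (\<Prod>l\<in>J-{j}. (-m - X l)/(X j - X l)) * X j ^ i) = (-m)^i"
      by (rule lagrange_identity[OF finJ injX]) (use that cardJ in simp)
    finally show ?thesis .
  qed
  have nodes: "0 \<le> X j \<and> X j \<le> 1" if "j \<in> J" for j
    using that by (auto simp: X_def J_def field_simps)
  define B where "B = (m+1) * (real t + 1)"
  have B1: "B \<ge> 1"
  proof -
    have "1 * 1 \<le> (m+1) * (real t + 1)" using m0 by (intro mult_mono) auto
    then show ?thesis by (simp add: B_def)
  qed
  have W_bound: "\<bar>W j\<bar> \<le> B^t" if j: "j \<in> J" for j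
  proof -
    have "\<bar>W j\<bar> = (\<Prod>l\<in>J-{j}. \<bar>(-m - X l)/(X j - X l)\<bar>)" by (simp add: W_def abs_prod)
    also have "\<dots> \<le> B ^ t"
    proof (rule prod_le_power)
      fix l assume l: "l \<in> J - {j}"
      have Xl: "0 \<le> X l" "X l \<le> 1" using nodes[of l] l by auto
      have "\<bar>real j - real l\<bar> \<ge> 1" using l by auto
      then have dist: "\<bar>X j - X l\<bar> * (real t + 1) \<ge> 1"
        by (simp add: X_def diff_divide_distrib[symmetric] abs_divide)
      have pos: "\<bar>X j - X l\<bar> > 0" using dist by (cases "\<bar>X j - X l\<bar> = 0") auto
      have "\<bar>-m - X l\<bar> = m + X l" using m0 Xl by simp
      also have "\<dots> \<le> (m+1) * 1" using Xl by simp
      also have "\<dots> \<le> (m+1) * (\<bar>X j - X l\<bar> * (real t + 1))" using m0 dist by (intro mult_left_mono) auto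
      finally have "\<bar>-m - X l\<bar> \<le> B * \<bar>X j - X l\<bar>" by (simp add: B_def mult_ac)
      then show "0 \<le> \<bar>(-m - X l)/(X j - X l)\<bar> \<and> \<bar>(-m - X l)/(X j - X l)\<bar> \<le> B"
        using pos by (simp add: abs_divide pos_divide_le_eq)
    next
      show "card (J - {j}) \<le> t" using j finJ cardJ by simp
    qed (rule B1)
    finally show ?thesis .
  qed
  have small: "\<epsilon> * (\<Sum>j\<in>J. \<bar>W j\<bar>) * 5 \<le> 1"
  proof -
    have uB: "u * B \<le> 1/500"
    proof -
      have um: "u * m \<le> 1/(2000 * real t)" unfolding m_def r_eq using u0 e0 tpos by (simp add: field_simps)
      have "u * B = (u*m + u) * (real t + 1)" by (simp add: B_def algebra_simps)
      also have "\<dots> \<le> (1/(2000 * real t) + 1/(4000 * real t)) * (real t + 1)"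
        using um u_le by (intro mult_right_mono add_mono) auto
      also have "\<dots> = 3 / 4000 * ((real t + 1) / real t)" using tpos by (simp add: field_simps)
      also have "\<dots> \<le> 3 / 4000 * 2" using tpos by (intro mult_left_mono) (auto simp: field_simps)
      finally show ?thesis by simp
    qed
    have "(\<Sum>j\<in>J. \<bar>W j\<bar>) \<le> (\<Sum>j\<in>J. B^t)" by (intro sum_mono W_bound)
    also have "\<dots> = (real t + 1) * B^t" using cardJ by simp
    finally have sW: "(\<Sum>j\<in>J. \<bar>W j\<bar>) \<le> (real t + 1) * B^t" .
    have "\<epsilon> * (\<Sum>j\<in>J. \<bar>W j\<bar>) * 5 \<le> \<epsilon> * ((real t + 1) * B^t) * 5"
      using sW e0 by (intro mult_right_mono mult_left_mono) auto
    also have "\<dots> = 5 * (real t + 1) * (u * B)^t" by (simp add: eps_u power_mult_distrib)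
    also have "\<dots> \<le> 5 * (real t + 1) * (1/500)^t"
      using uB u0 B1 by (intro mult_left_mono power_mono) auto
    also have "\<dots> \<le> 5 * 2^t * (1/500)^t"
    proof -
      have "t + 1 \<le> (2::nat)^t" by (simp add: Suc_le_eq)
      then have "real t + 1 \<le> 2^t" by (metis of_nat_1 of_nat_add of_nat_le_iff of_nat_numeral of_nat_power)
      then show ?thesis by (intro mult_right_mono) auto
    qed
    also have "\<dots> = 5 * (1/250)^t" by (simp add: power_mult_distrib[symmetric])
    also have "\<dots> \<le> 5 * (1/250)^1" using t by (intro mult_left_mono power_decreasing) auto
    finally show ?thesis by simp
  qed
  obtain a q1 q2 where H: "is_density a \<and> is_density q1 \<and> is_density q2 \<and> (\<forall>x. a x = (1-\<epsilon>) * q1 x + \<epsilon> * q2 x) \<and>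
     (\<forall>k\<in>{1..t}. integrable lborel (\<lambda>x. x^k * a x) \<and> (LINT x|lborel. x^k * a x) = (LINT x|lborel. x^k * std_normal_density x)) \<and>
     integrable lborel (\<lambda>x. x * q1 x) \<and> (LINT x|lborel. x * q1 x) = \<epsilon>*m/(1-\<epsilon>) \<and>
     (\<forall>i::nat. i \<ge> 1 \<longrightarrow> integrable lborel (\<lambda>x. \<bar>x - \<epsilon>*m/(1-\<epsilon>)\<bar>^i * q1 x) \<and> (LINT x|lborel. \<bar>x - \<epsilon>*m/(1-\<epsilon>)\<bar>^i * q1 x) powr (1/real i) \<le> 40 * sqrt (real i)) \<and>
     integrable lborel (\<lambda>x. (a x)\<^sup>2 / std_normal_density x) \<and> chi2 a std_normal_density \<le> 7 + exp (2*m^2/3)"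
    using core[OF finJ t e0 eps_half m0 ident nodes small dl] by blast
  have chi: "7 + exp (2*m^2/3) < exp (4 * \<delta>\<^sup>2 / \<epsilon>\<^sup>2)"
  proof -
    have "m^2 \<le> r^2" using m0 m_le by (intro power_mono) auto
    then have "2*m^2/3 \<le> r^2" using zero_le_power2[of m] by linarith
    then have c1: "exp (2*m^2/3) \<le> exp (r^2)" by simp
    have c2: "1 < exp (r^2)" using r2 by simp
    from c1 c2 have "7 + exp (2*m^2/3) < 8 * exp (r^2)" by linarith
    also have "8 \<le> exp (3::real)"
    proof -
      have "(2::real) \<le> exp 1" using exp_ge_add_one_self[of 1] by simp
      then have "(2::real)^3 \<le> exp 1 ^ 3" by (intro power_mono) auto
      also have "exp 1 ^ 3 = exp (3::real)" by (simp add: exp_of_nat_mult[symmetric])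
      finally show ?thesis by simp
    qed
    then have "8 * exp (r^2) \<le> exp 3 * exp (r^2)" by (intro mult_right_mono) auto
    also have "\<dots> = exp (3 + r^2)" by (simp add: exp_add)
    also have "\<dots> \<le> exp (4 * r^2)"
    proof -
      have "4 \<le> r^2" using r2 power_mono[of 2 r 2] by simp
      then show ?thesis by simp
    qed
    also have "4 * r^2 = 4 * \<delta>\<^sup>2 / \<epsilon>\<^sup>2" by (simp add: r_def power_divide)
    finally show ?thesis .
  qed
  show ?thesis
    apply (rule exI[of _ a], rule exI[of _ q1], rule exI[of _ q2])
    using H chi d_eq by auto
qed



theorem lemma6p14:
  "\<exists>C0 C1 C2 :: real. C0 > 0 \<and> C1 > 0 \<and> C2 > 0 \<and>
    (\<forall>(t::nat) (\<epsilon>::real). t \<ge> 1 \<longrightarrow> 0 < \<epsilon> \<longrightarrow> \<epsilon> \<le> (C0 * real t) powr (- real t) \<longrightarrow>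
      (let \<delta> = (1/2000) * (1 / real t) * \<epsilon> powr (1 - 1 / real t) in
       \<exists>a q1 q2 :: real \<Rightarrow> real.
         is_density a \<and> is_density q1 \<and> is_density q2 \<and>
         (\<forall>x. a x = (1 - \<epsilon>) * q1 x + \<epsilon> * q2 x) \<and>
         (\<forall>k\<in>{1..t}. integrable lborel (\<lambda>x. x ^ k * a x) \<and>
            (LINT x|lborel. x ^ k * a x) = (LINT x|lborel. x ^ k * std_normal_density x)) \<and>
         integrable lborel (\<lambda>x. x * q1 x) \<and> (LINT x|lborel. x * q1 x) = \<delta> \<and>
         (\<forall>i::nat. i \<ge> 1 \<longrightarrow> integrable lborel (\<lambda>x. \<bar>x - \<delta>\<bar> ^ i * q1 x) \<and>
            (LINT x|lborel. \<bar>x - \<delta>\<bar> ^ i * q1 x) powr (1 / real i) \<le> C1 * sqrt (real i)) \<and>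
         integrable lborel (\<lambda>x. (a x)\<^sup>2 / std_normal_density x) \<and>
         chi2 a std_normal_density < exp (C2 * \<delta>\<^sup>2 / \<epsilon>\<^sup>2)))"
  apply (rule exI[of _ "4000::real"], rule exI[of _ "40::real"], rule exI[of _ "4::real"])
  apply (intro conjI)
     apply simp
    apply simp
   apply simp
  apply (intro allI impI)
  apply (unfold Let_def)
  apply (rule main_case)
    apply assumption+
  done

end
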